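(* Let $q>0$, $x\in\mathbb{R}$ with $|x|<q$, and $\ell\in\{0,1,2,\ldots\}$. Then $$\tilde\gamma_\ell(q+x)=\tilde\gamma_\ell(q)+(-1)^\ell\sum_{j=2}^\infty\frac{x^{j-1}}{(j-1)!}\sum_{k=0}^{\ell}\binom{\ell}{k}(-1)^k k!\, s(j,k+1)\,\zeta_E^{(\ell-k)}(j,q).$$
   Context: For $q>0$, $\zeta_E(z,q)=\sum_{n=0}^\infty (-1)^n (n+q)^{-z}$ for $\mathrm{Re}(z)>0$, extended by analytic continuation to an entire function of $z$; $\zeta_E^{(m)}(z,q)$ denotes $\frac{\partial^m}{\partial z^m}\zeta_E(z,q)$. The modified Stieltjes constants $\tilde\gamma_k(q)$ are defined by the Taylor expansion $\zeta_E(z,q)=\sum_{k=0}^\infty\frac{(-1)^k\tilde\gamma_k(q)}{k!}(z-1)^k$. $s(n,k)$ are the (signed) Stirling numbers of the first kind: $x(x-1)\cdots(x-n+1)=\sum_{k=0}^n s(n,k)x^k$. *)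

theory Defs
  imports "HOL-Analysis.Analysis" "HOL-Combinatorics.Stirling"
begin

definition stirling1_signed :: "nat \<Rightarrow> nat \<Rightarrow> int" where
  "stirling1_signed n k = (-1) ^ (n - k) * int (stirling n k)"

definition zetaE :: "complex \<Rightarrow> real \<Rightarrow> complex" where
  "zetaE z q = (THE f. f holomorphic_on UNIV \<and>
      (\<forall>w. Re w > 0 \<longrightarrow> f w = (\<Sum>n. (-1) ^ n * (of_real (real n + q)) powr (- w)))) z"

definition zetaE_deriv :: "nat \<Rightarrow> complex \<Rightarrow> real \<Rightarrow> complex" where
  "zetaE_deriv m z q = (deriv ^^ m) (\<lambda>w. zetaE w q) z"

text \<open>Modified Stieltjes constants: zetaE z q = sum_k (-1)^k gamma_k(q)/k! (z-1)^k,
  i.e. the k-th Taylor coefficient at 1 is the k-th derivative over k!.\<close>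
definition mod_stieltjes :: "nat \<Rightarrow> real \<Rightarrow> complex" where
  "mod_stieltjes k q = (-1) ^ k * zetaE_deriv k 1 q"

end

theory Submission
  imports Defs "HOL-Complex_Analysis.Complex_Analysis" "HOL-Real_Asymp.Real_Asymp"
begin

fun DC :: "nat \<Rightarrow> complex \<Rightarrow> complex \<Rightarrow> complex" where
  "DC 0 z w = w powr (-z)"
| "DC (Suc K) z w = DC K z w - DC K z (w + 1)"

lemma DC_deriv:
  assumes "Re w > 0"
  shows "((\<lambda>w. DC K z w) has_field_derivative (-z * DC K (z+1) w)) (at w)"
  using assms
proof (induction K arbitrary: z w)
  case 0
  have nr: "w \<notin> \<real>\<^sub>\<le>\<^sub>0" using 0 by (auto simp: complex_nonpos_Reals_iff)
  have e: "-z - 1 = - (z+1)" by simp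
  from has_field_derivative_powr[OF nr, of "-z"]
  show ?case by (simp only: DC.simps e)
next
  case (Suc K)
  have d1: "((\<lambda>w. DC K z w) has_field_derivative (-z * DC K (z+1) w)) (at w)" using Suc by blast
  have "((\<lambda>w. DC K z w) has_field_derivative (-z * DC K (z+1) (w+1))) (at (w+1))"
    using Suc.IH[of "w+1" z] Suc.prems by simp
  then have d2: "((\<lambda>w. DC K z (w+1)) has_field_derivative (-z * DC K (z+1) (w+1))) (at w)"
    using DERIV_shift by blast
  show ?case using DERIV_diff[OF d1 d2] by (simp add: algebra_simps)
qed

lemma DC_bound:
  assumes "t > 0" "Re z + K \<ge> 0"
  shows "norm (DC K z (of_real t)) \<le> (norm z + K)^K * t powr (-Re z - K)"
  using assms
proof (induction K arbitrary: z t)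
  case 0 then show ?case by (simp add: norm_powr_real_powr)
next
  case (Suc K)
  define S where "S = complex_of_real ` {t..t+1}"
  have cS: "convex S" unfolding S_def
    by (intro convex_linear_image bounded_linear.linear[OF bounded_linear_of_real]) auto
  define B where "B = norm z * ((norm z + 1 + K)^K * t powr (-Re z - 1 - K))"
  have der: "((\<lambda>w. DC K z w) has_field_derivative (-z * DC K (z+1) w)) (at w within S)"
    if "w \<in> S" for w
  proof -
    have "Re w > 0" using that Suc.prems unfolding S_def by auto
    then show ?thesis using DC_deriv has_field_derivative_at_within by blast
  qed
  have bnd: "norm (-z * DC K (z+1) w) \<le> B" if "w \<in> S" for w
  proof -
    obtain s where s: "w = of_real s" "t \<le> s" "s \<le> t + 1" using \<open>w \<in> S\<close> unfolding S_def by auto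
    have s0: "s > 0" using s Suc.prems by simp
    have "norm (DC K (z+1) (of_real s)) \<le> (norm (z+1) + K)^K * s powr (-Re (z+1) - K)"
      using Suc.IH[of s "z+1"] s0 Suc.prems by simp
    also have "\<dots> \<le> (norm z + 1 + K)^K * t powr (-Re z - 1 - K)"
    proof (rule mult_mono)
      show "(norm (z+1) + K)^K \<le> (norm z + 1 + K)^K"
        by (intro power_mono) (use norm_triangle_ineq[of z 1] in auto)
      show "s powr (-Re (z+1) - K) \<le> t powr (-Re z - 1 - K)"
        using powr_mono2'[of "-Re z - 1 - K" t s] Suc.prems s by simp
    qed auto
    finally show ?thesis unfolding B_def s(1) norm_mult norm_minus_cancel
      by (intro mult_left_mono) auto
  qed
  have "norm (DC K z (of_real t) - DC K z (of_real (t+1))) \<le> B * norm (complex_of_real t - of_real (t+1))"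
  proof (rule field_differentiable_bound[OF cS der bnd])
    show "complex_of_real t \<in> S" using Suc.prems by (auto simp: S_def)
    show "complex_of_real (t+1) \<in> S" unfolding S_def by (rule image_eqI[of _ _ "t+1"]) auto
  qed
  also have "\<dots> = B" by simp
  also have "\<dots> \<le> (norm z + Suc K)^Suc K * t powr (-Re z - Suc K)"
  proof -
    have "norm z * (norm z + 1 + K)^K \<le> (norm z + 1 + K) * (norm z + 1 + K)^K"
      by (intro mult_right_mono) auto
    then show ?thesis unfolding B_def
      by (simp add: algebra_simps mult_right_mono)
  qed
  finally show ?case by (simp add: add.commute)
qed

lemma summable_shift_powr:
  assumes "p > 1" "q > 0"
  shows "summable (\<lambda>n. (real n + q) powr (-p))"
proof (rule summable_comparison_test')
  show "summable (\<lambda>n. real n powr (-p))" using assms summable_real_powr_iff by simp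
  fix n :: nat assume "n \<ge> 1"
  then show "norm ((real n + q) powr (-p)) \<le> real n powr (-p)"
    using powr_mono2'[of "-p" "real n" "real n + q"] assms by simp
qed

lemma tendsto_shift_powr:
  assumes "e > 0" "q > 0"
  shows "(\<lambda>n. (real n + q) powr (-e)) \<longlonglongrightarrow> 0"
  using assms by real_asymp

lemma euler_step:
  fixes b :: "nat \<Rightarrow> complex"
  assumes sm: "summable (\<lambda>n. (-1)^n * (b n - b (Suc n)))" and b0: "b \<longlonglongrightarrow> 0"
  shows "(\<lambda>n. (-1)^n * b n) sums (b 0 / 2 + (\<Sum>n. (-1)^n * (b n - b (Suc n))) / 2)"
proof -
  have id2: "2 * (\<Sum>n<N. (-1)^n * b n) = ((\<Sum>n<N. (-1)^n * (b n - b (Suc n))) + b 0 - (-1)^N * b N)" for N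
    by (induction N) (simp_all add: algebra_simps)
  have id: "(\<Sum>n<N. (-1)^n * b n) = ((\<Sum>n<N. (-1)^n * (b n - b (Suc n))) + b 0 - (-1)^N * b N) / 2" for N
    using id2[of N] by (simp add: eq_divide_eq mult.commute)
  have t1: "(\<lambda>N. (-1)^N * b N) \<longlonglongrightarrow> 0"
  proof -
    have "(\<lambda>N. norm ((-1)^N * b N)) \<longlonglongrightarrow> 0"
      using tendsto_norm_zero[OF b0] by (simp add: norm_mult norm_power)
    then show ?thesis using tendsto_norm_zero_iff by blast
  qed
  have "(\<lambda>N. ((\<Sum>n<N. (-1)^n * (b n - b (Suc n))) + b 0 - (-1)^N * b N) / 2) \<longlonglongrightarrow>
        ((\<Sum>n. (-1)^n * (b n - b (Suc n))) + b 0 - 0) / 2"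
    by (intro tendsto_intros summable_LIMSEQ sm t1) simp
  then show ?thesis unfolding sums_def id by (simp add: add_divide_distrib add_ac)
qed

lemma DC_holo: "(\<lambda>z. DC K z w) holomorphic_on A"
  by (induction K arbitrary: w) (auto intro!: holomorphic_intros)

lemma holo_suminf:
  assumes S: "open S" and hol: "\<And>n. f n holomorphic_on S"
   and loc: "\<And>x. x \<in> S \<Longrightarrow> \<exists>d h. 0 < d \<and> summable h \<and> (\<forall>\<^sub>F n in sequentially. \<forall>y\<in>ball x d \<inter> S. norm (f n y) \<le> h n)"
  shows "(\<lambda>z. \<Sum>n. f n z) holomorphic_on S" "\<And>x. x \<in> S \<Longrightarrow> summable (\<lambda>n. f n x)"
proof -
  have hfd: "\<And>n x. x \<in> S \<Longrightarrow> (f n has_field_derivative deriv (f n) x) (at x)"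
    using holomorphic_derivI[OF hol S] by blast
  obtain g g' where gg: "\<forall>x \<in> S. ((\<lambda>n. f n x) sums g x) \<and> ((\<lambda>n. deriv (f n) x) sums g' x) \<and> (g has_field_derivative g' x) (at x)"
    using series_and_derivative_comparison_local[OF S hfd loc] by blast
  have "g holomorphic_on S" using gg S holomorphic_on_open by blast
  moreover have "\<And>x. x \<in> S \<Longrightarrow> g x = (\<Sum>n. f n x)" using gg sums_unique by blast
  ultimately show "(\<lambda>z. \<Sum>n. f n z) holomorphic_on S" using holomorphic_transform by metis
  show "\<And>x. x \<in> S \<Longrightarrow> summable (\<lambda>n. f n x)" using gg sums_summable by blast
qed

definition Fk :: "real \<Rightarrow> nat \<Rightarrow> complex \<Rightarrow> complex" where
  "Fk q K z = (\<Sum>k<K. DC k z (of_real q) / 2^(k+1)) + (\<Sum>n. (-1)^n * DC K z (of_real (real n + q))) / 2^K"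

lemma DC_term_bound:
  assumes "q > 0" "Re z + K \<ge> 0"
  shows "norm ((-1)^n * DC K z (of_real (real n + q))) \<le> (norm z + K)^K * (real n + q) powr (-(Re z + K))"
  using DC_bound[of "real n + q" z K] assms by (simp add: norm_mult norm_power)

lemma DC_local_bound:
  assumes q: "q > 0" and x: "Re x > 1 - real K"
  shows "\<exists>d h. 0 < d \<and> summable h \<and> (\<forall>\<^sub>F n in sequentially. \<forall>y\<in>ball x d \<inter> S.
           norm ((-1)^n * DC K y (of_real (real n + q))) \<le> h n)"
proof -
  define d where "d = (Re x - 1 + K) / 2"
  have d: "d > 0" using x by (simp add: d_def)
  define h where "h n = (norm x + d + K)^K * (real n + q) powr (-(1+d))" for n
  have "summable h" unfolding h_def using d q by (intro summable_mult summable_shift_powr) auto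
  moreover have "\<forall>\<^sub>F n in sequentially. \<forall>y\<in>ball x d \<inter> S.
           norm ((-1)^n * DC K y (of_real (real n + q))) \<le> h n"
    unfolding eventually_sequentially
  proof (intro exI[of _ 1] allI impI ballI)
    fix n :: nat and y assume n: "n \<ge> 1" and y: "y \<in> ball x d \<inter> S"
    have dy: "norm (x - y) < d" using y by (auto simp: dist_norm)
    have "\<bar>Re x - Re y\<bar> \<le> norm (x - y)" using abs_Re_le_cmod[of "x-y"] by simp
    then have r1: "Re x - Re y \<le> norm (x - y)" by (rule abs_le_D1)
    have ry: "Re y > 1 - real K + d" using dy r1 unfolding d_def by (simp add: field_simps)
    have ny: "norm y \<le> norm x + d" using norm_triangle_ineq2[of y x] dy by (simp add: norm_minus_commute)
    have "norm ((-1)^n * DC K y (of_real (real n + q))) \<le> (norm y + K)^K * (real n + q) powr (-(Re y + K))"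
      using DC_term_bound[of q y K n] q ry d by simp
    also have "\<dots> \<le> h n" unfolding h_def
    proof (rule mult_mono)
      show "(norm y + K)^K \<le> (norm x + d + K)^K" using ny by (intro power_mono) auto
      show "(real n + q) powr (-(Re y + K)) \<le> (real n + q) powr (-(1+d))"
        using n q ry by (intro powr_mono) auto
    qed (use d in auto)
    finally show "norm ((-1)^n * DC K y (of_real (real n + q))) \<le> h n" .
  qed
  ultimately show ?thesis using d by blast
qed

lemma Fk_holo:
  assumes q: "q > 0"
  shows "Fk q K holomorphic_on {z. Re z > 1 - real K}"
proof -
  have o: "open {z. Re z > 1 - real K}" by (rule open_halfspace_Re_gt)
  have "(\<lambda>z. \<Sum>n. (-1)^n * DC K z (of_real (real n + q))) holomorphic_on {z. Re z > 1 - real K}"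
  proof (rule holo_suminf(1)[OF o])
    fix n :: nat
    show "(\<lambda>z. (-1)^n * DC K z (of_real (real n + q))) holomorphic_on {z. Re z > 1 - real K}"
      by (intro holomorphic_intros DC_holo)
  next
    fix x :: complex assume "x \<in> {z. Re z > 1 - real K}"
    then show "\<exists>d h. 0 < d \<and> summable h \<and> (\<forall>\<^sub>F n in sequentially. \<forall>y\<in>ball x d \<inter> {z. Re z > 1 - real K}.
           norm ((-1)^n * DC K y (of_real (real n + q))) \<le> h n)"
      using DC_local_bound[OF q] by blast
  qed
  then show ?thesis unfolding Fk_def[abs_def]
    by (intro holomorphic_intros DC_holo) auto
qed

lemma Fk_step:
  assumes q: "q > 0" and z: "Re z > 1 - real K"
  shows "Fk q (Suc K) z = Fk q K z"
proof -
  define b where "b n = DC K z (of_real (real n + q))" for n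
  have bd: "b n - b (Suc n) = DC (Suc K) z (of_real (real n + q))" for n
    by (simp add: b_def add_ac)
  have sm: "summable (\<lambda>n. (-1)^n * (b n - b (Suc n)))"
    unfolding bd
  proof (rule summable_comparison_test')
    show "summable (\<lambda>n. (norm z + Suc K)^Suc K * (real n + q) powr (-(Re z + Suc K)))"
      using z q by (intro summable_mult summable_shift_powr) auto
    show "norm ((-1)^n * DC (Suc K) z (of_real (real n + q))) \<le> (norm z + Suc K)^Suc K * (real n + q) powr (-(Re z + Suc K))" for n
      by (rule DC_term_bound) (use q z in auto)
  qed
  have b0: "b \<longlonglongrightarrow> 0"
  proof (rule Lim_null_comparison)
    show "\<forall>\<^sub>F n in sequentially. norm (b n) \<le> (norm z + K)^K * (real n + q) powr (-(Re z + K))"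
      using DC_term_bound[of q z K] q z unfolding b_def by (auto simp: norm_mult norm_power)
    show "(\<lambda>n. (norm z + K)^K * (real n + q) powr (-(Re z + K))) \<longlonglongrightarrow> 0"
      using z q by (intro tendsto_mult_right_zero tendsto_shift_powr) auto
  qed
  have "(\<lambda>n. (-1)^n * b n) sums (b 0 / 2 + (\<Sum>n. (-1)^n * (b n - b (Suc n))) / 2)"
    by (rule euler_step[OF sm b0])
  define D where "D = (\<Sum>n. (-1)^n * DC (Suc K) z (of_real (real n + q)))"
  have e: "(\<Sum>n. (-1)^n * b n) = b 0 / 2 + D / 2"
    using sums_unique[OF \<open>(\<lambda>n. (-1)^n * b n) sums _\<close>] unfolding bd D_def by simp
  have f1: "Fk q K z = (\<Sum>k<K. DC k z (of_real q) / 2^(k+1)) + (\<Sum>n. (-1)^n * b n) / 2^K"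
    unfolding Fk_def b_def by (rule refl)
  have f2: "Fk q (Suc K) z = (\<Sum>k<Suc K. DC k z (of_real q) / 2^(k+1)) + D / 2^(Suc K)"
    unfolding Fk_def D_def by (rule refl)
  have b00: "b 0 = DC K z (of_real q)" by (simp add: b_def)
  show ?thesis unfolding f1 f2 e sum.lessThan_Suc b00 by (simp add: field_simps)
qed

lemma Fk_mono:
  assumes q: "q > 0" and z: "Re z > 1 - real K"
  shows "Fk q (K + j) z = Fk q K z"
proof (induction j)
  case (Suc j)
  have "Fk q (Suc (K + j)) z = Fk q (K + j) z" by (rule Fk_step) (use q z in auto)
  then show ?case using Suc by simp
qed simp

definition Zf :: "real \<Rightarrow> complex \<Rightarrow> complex" where
  "Zf q z = Fk q (nat \<lceil>1 - Re z\<rceil> + 1) z"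

lemma Zf_eq:
  assumes q: "q > 0" and z: "Re z > 1 - real K"
  shows "Zf q z = Fk q K z"
proof -
  define K0 where "K0 = nat \<lceil>1 - Re z\<rceil> + 1"
  have z0: "Re z > 1 - real K0" unfolding K0_def by linarith
  have e1: "K0 + (max K K0 - K0) = max K K0" and e2: "K + (max K K0 - K) = max K K0" by auto
  have "Fk q K0 z = Fk q (max K K0) z" using Fk_mono[OF q z0, of "max K K0 - K0"] e1 by simp
  also have "\<dots> = Fk q K z" using Fk_mono[OF q z, of "max K K0 - K"] e2 by simp
  finally show ?thesis unfolding Zf_def K0_def .
qed

lemma Zf_holo:
  assumes q: "q > 0"
  shows "Zf q holomorphic_on UNIV"
proof -
  have "Zf q holomorphic_on (\<Union>K. {z. Re z > 1 - real K})"
  proof (rule holomorphic_on_UN_open)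
    fix K :: nat
    show "open {z. Re z > 1 - real K}" by (rule open_halfspace_Re_gt)
    show "Zf q holomorphic_on {z. Re z > 1 - real K}"
      by (rule holomorphic_transform[OF Fk_holo[OF q]]) (use Zf_eq[OF q] in auto)
  qed
  moreover have "UNIV \<subseteq> (\<Union>K. {z. Re z > 1 - real K})"
  proof
    fix z :: complex
    have "Re z > 1 - real (nat \<lceil>1 - Re z\<rceil> + 1)" by linarith
    then show "z \<in> (\<Union>K. {z. Re z > 1 - real K})" by blast
  qed
  ultimately show ?thesis using holomorphic_on_subset by blast
qed

lemma Zf_series:
  assumes q: "q > 0" and z: "Re z > 0"
  shows "(\<lambda>n. (-1::complex)^n * (complex_of_real (real n + q)) powr (-z)) sums Zf q z"
proof -
  define b where "b n = DC 0 z (of_real (real n + q))" for n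
  have bd: "b n - b (Suc n) = DC 1 z (of_real (real n + q))" for n
    by (simp add: b_def add_ac)
  have sm: "summable (\<lambda>n. (-1)^n * (b n - b (Suc n)))"
    unfolding bd
  proof (rule summable_comparison_test')
    show "summable (\<lambda>n. (norm z + 1)^1 * (real n + q) powr (-(Re z + 1)))"
      using z q by (intro summable_mult summable_shift_powr) auto
    show "norm ((-1)^n * DC 1 z (of_real (real n + q))) \<le> (norm z + 1)^1 * (real n + q) powr (-(Re z + 1))" for n
      using DC_term_bound[where q=q and z=z and K=1 and n=n] q z by simp
  qed
  have b0: "b \<longlonglongrightarrow> 0"
  proof (rule Lim_null_comparison)
    show "\<forall>\<^sub>F n in sequentially. norm (b n) \<le> (real n + q) powr (-(Re z))"
      using q unfolding b_def by (auto simp: norm_powr_real_powr)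
    show "(\<lambda>n. (real n + q) powr (-(Re z))) \<longlonglongrightarrow> 0"
      using z q by (intro tendsto_shift_powr) auto
  qed
  have "(\<lambda>n. (-1)^n * b n) sums (b 0 / 2 + (\<Sum>n. (-1)^n * (b n - b (Suc n))) / 2)"
    by (rule euler_step[OF sm b0])
  moreover have "Zf q z = Fk q 1 z" using Zf_eq[OF q, where z=z and K=1] z by simp
  ultimately show ?thesis unfolding bd Fk_def by (simp add: b_def)
qed

lemma zetaE_Zf:
  assumes q: "q > 0"
  shows "zetaE z q = Zf q z"
proof -
  let ?P = "\<lambda>f. f holomorphic_on UNIV \<and>
      (\<forall>w. Re w > 0 \<longrightarrow> f w = (\<Sum>n. (-1) ^ n * (of_real (real n + q)) powr (- w)))"
  have P: "?P (Zf q)"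
  proof (intro conjI allI impI)
    show "Zf q holomorphic_on UNIV" by (rule Zf_holo[OF q])
    fix w :: complex assume w: "Re w > 0"
    show "Zf q w = (\<Sum>n. (-1) ^ n * (of_real (real n + q)) powr (- w))"
      by (rule sums_unique[OF Zf_series[OF q w]])
  qed
  have "(THE f. ?P f) = Zf q"
  proof (rule the_equality[where P="?P", OF P])
    fix f assume f: "?P f"
    show "f = Zf q"
    proof
      fix w
      show "f w = Zf q w"
      proof (rule analytic_continuation_open[where s="{z. Re z > 0}" and s'=UNIV and f=f and g="Zf q"])
        show "{z. Re z > 0} \<noteq> {}" by (auto intro!: exI[of _ 1])
        show "open {z. Re z > 0}" by (rule open_halfspace_Re_gt)
        show "f holomorphic_on UNIV" using f by blast
        show "Zf q holomorphic_on UNIV" using P by blast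
        show "\<And>z. z \<in> {z. Re z > 0} \<Longrightarrow> f z = Zf q z" using f P by simp
      qed auto
    qed
  qed
  then show ?thesis unfolding zetaE_def by simp
qed

lemma termwise_higher_deriv:
  assumes S: "open S"
  shows "\<And>f x. (\<And>n. f n holomorphic_on S) \<Longrightarrow>
     (\<And>x. x \<in> S \<Longrightarrow> \<exists>d>0. \<exists>M N. summable M \<and> cball x d \<subseteq> S \<and> (\<forall>n\<ge>N. \<forall>y\<in>cball x d. norm (f n y) \<le> M n)) \<Longrightarrow>
     x \<in> S \<Longrightarrow> (\<lambda>n. (deriv ^^ k) (f n) x) sums (deriv ^^ k) (\<lambda>z. \<Sum>n. f n z) x"
proof (induction k)
  case 0
  fix f x
  assume hol: "\<And>n. f n holomorphic_on S"
    and loc: "\<And>x. x \<in> S \<Longrightarrow> \<exists>d>0. \<exists>M N. summable M \<and> cball x d \<subseteq> S \<and> (\<forall>n\<ge>N. \<forall>y\<in>cball x d. norm (f n y) \<le> M n)"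
    and x: "x \<in> S"
  obtain d M N where d: "d > 0" "summable M" "cball x d \<subseteq> S" "\<forall>n\<ge>N. \<forall>y\<in>cball x d. norm (f n y) \<le> M n"
    using loc[OF x] by blast
  have "summable (\<lambda>n. f n x)"
    by (rule summable_comparison_test'[OF d(2), of N]) (use d in auto)
  then show "(\<lambda>n. (deriv ^^ 0) (f n) x) sums (deriv ^^ 0) (\<lambda>z. \<Sum>n. f n z) x"
    by (simp add: summable_sums)
next
  case (Suc k)
  fix f x
  assume hol: "\<And>n. f n holomorphic_on S"
    and loc: "\<And>x. x \<in> S \<Longrightarrow> \<exists>d>0. \<exists>M N. summable M \<and> cball x d \<subseteq> S \<and> (\<forall>n\<ge>N. \<forall>y\<in>cball x d. norm (f n y) \<le> M n)"
    and x: "x \<in> S"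
  define f' where "f' n = deriv (f n)" for n
  define g where "g = (\<lambda>z. \<Sum>n. f n z)"
  define G' where "G' = (\<lambda>z. \<Sum>n. f' n z)"
  have hol': "f' n holomorphic_on S" for n unfolding f'_def by (rule holomorphic_deriv[OF hol S])
  have loc': "\<exists>d>0. \<exists>M N. summable M \<and> cball y d \<subseteq> S \<and> (\<forall>n\<ge>N. \<forall>w\<in>cball y d. norm (f' n w) \<le> M n)"
    if y: "y \<in> S" for y
  proof -
    obtain d M N where d: "d > 0" "summable M" "cball y d \<subseteq> S" "\<forall>n\<ge>N. \<forall>w\<in>cball y d. norm (f n w) \<le> M n"
      using loc[OF y] by blast
    define M' where "M' n = (M n + (1/2)^n) / (d/2)" for n
    have "summable M'" unfolding M'_def
      by (intro summable_divide summable_add d(2) summable_geometric) auto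
    moreover have "cball y (d/2) \<subseteq> S" using d subset_cball[of "d/2" d y] by auto
    moreover have "\<forall>n\<ge>N. \<forall>w\<in>cball y (d/2). norm (f' n w) \<le> M' n"
    proof (intro allI impI ballI)
      fix n w assume n: "n \<ge> N" and w: "w \<in> cball y (d/2)"
      have sub: "cball w (d/2) \<subseteq> cball y d"
      proof
        fix u assume "u \<in> cball w (d/2)"
        then have "dist w u \<le> d/2" by simp
        moreover have "dist y w \<le> d/2" using w by simp
        ultimately show "u \<in> cball y d" using dist_triangle[of y u w] by simp
      qed
      have "norm ((deriv ^^ 1) (f n) w) \<le> fact 1 * (M n + (1/2)^n) / (d/2)^1"
      proof (rule Cauchy_higher_deriv_bound)
        show "f n holomorphic_on ball w (d/2)"
          using hol sub d(3) ball_subset_cball by (meson holomorphic_on_subset order_trans)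
        show "continuous_on (cball w (d/2)) (f n)"
          using hol sub d(3) by (meson holomorphic_on_imp_continuous_on holomorphic_on_subset order_trans)
        show "f n u \<in> ball 0 (M n + (1/2)^n)" if "u \<in> ball w (d/2)" for u
        proof -
          have "u \<in> cball y d" using that sub by (meson ball_subset_cball subsetD)
          then have "norm (f n u) \<le> M n" using d(4) n by blast
          moreover have "(1/2::real)^n > 0" by simp
          ultimately have "norm (f n u) < M n + (1/2)^n" by linarith
          then show ?thesis by simp
        qed
      qed (use d in auto)
      then show "norm (f' n w) \<le> M' n" by (simp add: f'_def M'_def)
    qed
    ultimately show ?thesis using d by (intro exI[of _ "d/2"] exI[of _ M'] exI[of _ N]) auto
  qed
  have hfd: "\<And>n x. x \<in> S \<Longrightarrow> (f n has_field_derivative f' n x) (at x)"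
    unfolding f'_def using holomorphic_derivI[OF hol S] by blast
  have to_g: "\<exists>d h. 0 < d \<and> summable h \<and> (\<forall>\<^sub>F n in sequentially. \<forall>w\<in>ball y d \<inter> S. norm (f n w) \<le> h n)"
    if y: "y \<in> S" for y
  proof -
    obtain d M N where d: "d > 0" "summable M" "cball y d \<subseteq> S" "\<forall>n\<ge>N. \<forall>w\<in>cball y d. norm (f n w) \<le> M n"
      using loc[OF y] by blast
    then show ?thesis unfolding eventually_sequentially
      by (intro exI[of _ d] exI[of _ M]) (auto intro!: exI[of _ N])
  qed
  have "\<exists>g g'. \<forall>x \<in> S. ((\<lambda>n. f n x) sums g x) \<and> ((\<lambda>n. f' n x) sums g' x) \<and> (g has_field_derivative g' x) (at x)"
    by (rule series_and_derivative_comparison_local[OF S hfd to_g])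
  then obtain g0 g0' where gg: "\<forall>x \<in> S. ((\<lambda>n. f n x) sums g0 x) \<and> ((\<lambda>n. f' n x) sums g0' x) \<and> (g0 has_field_derivative g0' x) (at x)"
    by blast
  have gg0: "g y = g0 y" if y: "y \<in> S" for y
  proof -
    have "(\<lambda>n. f n y) sums g0 y" using gg y by blast
    then show ?thesis unfolding g_def by (simp add: sums_iff)
  qed
  have dg: "(g has_field_derivative g0' y) (at y)" if y: "y \<in> S" for y
    using has_field_derivative_transform_within_open[of g0 "g0' y" y S g] gg gg0 y S by auto
  have G'eq: "G' y = deriv g y" if y: "y \<in> S" for y
  proof -
    have "(\<lambda>n. f' n y) sums g0' y" using gg y by blast
    then have "G' y = g0' y" unfolding G'_def by (simp add: sums_iff)
    also have "\<dots> = deriv g y" using dg[OF y] DERIV_imp_deriv by metis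
    finally show ?thesis .
  qed
  have gh: "g holomorphic_on S" using dg S holomorphic_on_open by blast
  have dgh: "deriv g holomorphic_on S" by (rule holomorphic_deriv[OF gh S])
  have G'h: "G' holomorphic_on S" using holomorphic_transform[OF dgh] G'eq by metis
  have "(deriv ^^ Suc k) g x = (deriv ^^ k) (deriv g) x" by (simp only: funpow_Suc_right comp_def)
  also have "\<dots> = (deriv ^^ k) G' x"
    by (rule higher_deriv_transform_within_open[OF dgh G'h S x]) (use G'eq in auto)
  finally have e1: "(deriv ^^ Suc k) g x = (deriv ^^ k) G' x" .
  have "(\<lambda>n. (deriv ^^ k) (f' n) x) sums (deriv ^^ k) G' x"
    unfolding G'_def by (rule Suc.IH[OF hol' loc' x])
  then show "(\<lambda>n. (deriv ^^ Suc k) (f n) x) sums (deriv ^^ Suc k) (\<lambda>z. \<Sum>n. f n z) x"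
    using e1 unfolding g_def f'_def by (simp only: funpow_Suc_right comp_def)
qed

lemma higher_deriv_shift:
  assumes "h holomorphic_on UNIV"
  shows "(deriv ^^ i) (\<lambda>z. h (z + c)) w = (deriv ^^ i) h (w + c)"
  using assms
proof (induction i arbitrary: h w)
  case 0 then show ?case by simp
next
  case (Suc i)
  have d: "deriv (\<lambda>z. h (z + c)) = (\<lambda>z. deriv h (z + c))"
  proof
    fix z
    have "(h has_field_derivative deriv h (z + c)) (at (z + c))"
      using Suc.prems holomorphic_derivI[of h UNIV] by blast
    then have "((\<lambda>z. h (z + c)) has_field_derivative deriv h (z + c)) (at z)"
      using DERIV_shift by blast
    then show "deriv (\<lambda>z. h (z + c)) z = deriv h (z + c)" by (rule DERIV_imp_deriv)
  qed
  have "(deriv ^^ Suc i) (\<lambda>z. h (z + c)) w = (deriv ^^ i) (\<lambda>z. deriv h (z + c)) w"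
    by (simp only: funpow_Suc_right comp_def d)
  also have "\<dots> = (deriv ^^ i) (deriv h) (w + c)"
    by (rule Suc.IH) (rule holomorphic_deriv[OF Suc.prems open_UNIV])
  also have "\<dots> = (deriv ^^ Suc i) h (w + c)" by (simp only: funpow_Suc_right comp_def)
  finally show ?case .
qed

lemma higher_deriv_mult_linear:
  assumes "h holomorphic_on UNIV"
  shows "(deriv ^^ k) (\<lambda>z. h z * (z + c)) w = (deriv ^^ k) h w * (w + c) + of_nat k * (deriv ^^ (k - 1)) h w"
  using assms
proof (induction k arbitrary: h)
  case 0 then show ?case by simp
next
  case (Suc k)
  have hd: "deriv h holomorphic_on UNIV" by (rule holomorphic_deriv[OF Suc.prems open_UNIV])
  have d: "deriv (\<lambda>z. h z * (z + c)) = (\<lambda>z. deriv h z * (z + c) + h z)"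
  proof
    fix z
    have "(h has_field_derivative deriv h z) (at z)"
      using Suc.prems holomorphic_derivI[of h UNIV] by blast
    moreover have "((\<lambda>z. z + c) has_field_derivative 1) (at z)"
      by (intro derivative_eq_intros) auto
    ultimately have "((\<lambda>z. h z * (z + c)) has_field_derivative deriv h z * (z + c) + 1 * h z) (at z)"
      by (rule DERIV_mult)
    then show "deriv (\<lambda>z. h z * (z + c)) z = deriv h z * (z + c) + h z"
      using DERIV_imp_deriv by fastforce
  qed
  have "(deriv ^^ Suc k) (\<lambda>z. h z * (z + c)) w = (deriv ^^ k) (\<lambda>z. deriv h z * (z + c) + h z) w"
    by (simp only: funpow_Suc_right comp_def d)
  also have "\<dots> = (deriv ^^ k) (\<lambda>z. deriv h z * (z + c)) w + (deriv ^^ k) h w"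
    by (rule higher_deriv_add[where S=UNIV]) (auto intro!: holomorphic_intros hd Suc.prems)
  also have "(deriv ^^ k) (\<lambda>z. deriv h z * (z + c)) w =
      (deriv ^^ k) (deriv h) w * (w + c) + of_nat k * (deriv ^^ (k - 1)) (deriv h) w"
    by (rule Suc.IH[OF hd])
  also have "(deriv ^^ k) (deriv h) = (deriv ^^ Suc k) h" by (simp only: funpow_Suc_right comp_def)
  also have "of_nat k * (deriv ^^ (k - 1)) (deriv h) w = of_nat k * (deriv ^^ k) h w"
    by (cases k) (simp_all only: funpow_Suc_right comp_def diff_Suc_1 of_nat_0 mult_zero_left)
  finally show ?case by (simp add: algebra_simps)
qed

lemma higher_deriv_pochhammer:
  "(deriv ^^ k) (\<lambda>z. pochhammer z m) (1::complex) = fact k * of_nat (stirling (Suc m) (Suc k))"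
proof (induction m arbitrary: k)
  case 0
  then show ?case by (cases k) auto
next
  case (Suc m)
  note IH = Suc.IH
  have ph: "(\<lambda>z::complex. pochhammer z m) holomorphic_on UNIV" by (intro holomorphic_intros)
  have "(deriv ^^ k) (\<lambda>z::complex. pochhammer z (Suc m)) 1 = (deriv ^^ k) (\<lambda>z. pochhammer z m * (z + of_nat m)) 1"
    by (simp add: pochhammer_Suc)
  also have "\<dots> = (deriv ^^ k) (\<lambda>z. pochhammer z m) (1::complex) * (1 + of_nat m) + of_nat k * (deriv ^^ (k - 1)) (\<lambda>z. pochhammer z m) 1"
    by (rule higher_deriv_mult_linear[OF ph])
  also have "\<dots> = (fact k :: complex) * of_nat (stirling (Suc (Suc m)) (Suc k))"
  proof (cases k)
    case 0
    then show ?thesis using IH[of 0] by (simp add: stirling_Suc_n_1 algebra_simps)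
  next
    case (Suc k')
    have e: "stirling (Suc (Suc m)) (Suc (Suc k')) = Suc m * stirling (Suc m) (Suc (Suc k')) + stirling (Suc m) (Suc k')"
      by (rule stirling.simps(4))
    have gen: "\<And>a b::nat. (fact (Suc k')::complex) * of_nat a * (1 + of_nat m) + of_nat (Suc k') * (fact k' * of_nat b)
        = fact (Suc k') * of_nat (Suc m * a + b)"
      by (simp add: algebra_simps)
    have "(deriv ^^ k) (\<lambda>z. pochhammer z m) (1::complex) * (1 + of_nat m) + of_nat k * (deriv ^^ (k - 1)) (\<lambda>z. pochhammer z m) 1
       = fact (Suc k') * of_nat (stirling (Suc m) (Suc (Suc k'))) * (1 + of_nat m) + of_nat (Suc k') * (fact k' * of_nat (stirling (Suc m) (Suc k')))"
      by (simp only: \<open>k = Suc k'\<close> IH diff_Suc_1)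
    also have "\<dots> = fact (Suc k') * of_nat (Suc m * stirling (Suc m) (Suc (Suc k')) + stirling (Suc m) (Suc k'))"
      by (rule gen)
    also have "\<dots> = (fact k :: complex) * of_nat (stirling (Suc (Suc m)) (Suc k))"
      by (simp only: \<open>k = Suc k'\<close> e)
    finally show ?thesis .
  qed
  finally show ?case .
qed

lemma pochhammer_nonneg_real: "0 \<le> a \<Longrightarrow> 0 \<le> pochhammer (a::real) m"
  by (induction m) (auto simp: pochhammer_Suc)

lemma norm_pochhammer_le: "norm (pochhammer (z::complex) m) \<le> pochhammer (norm z) m"
proof (induction m)
  case (Suc m)
  have "norm (pochhammer z (Suc m)) = norm (pochhammer z m) * norm (z + of_nat m)"
    by (simp add: pochhammer_Suc norm_mult)
  also have "\<dots> \<le> pochhammer (norm z) m * (norm z + of_nat m)"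
  proof (rule mult_mono)
    show "norm (z + of_nat m) \<le> norm z + of_nat m"
      using norm_triangle_ineq[of z "of_nat m"] by simp
  qed (use Suc in \<open>auto simp: pochhammer_nonneg_real\<close>)
  also have "\<dots> = pochhammer (norm z) (Suc m)" by (simp add: pochhammer_Suc)
  finally show ?case .
qed simp

lemma pochhammer_mono_real:
  assumes "0 \<le> a" "a \<le> (b::real)"
  shows "pochhammer a m \<le> pochhammer b m"
proof (induction m)
  case (Suc m)
  have "pochhammer a m * (a + of_nat m) \<le> pochhammer b m * (b + of_nat m)"
    by (rule mult_mono) (use Suc assms in \<open>auto simp: pochhammer_nonneg_real\<close>)
  then show ?case by (simp add: pochhammer_Suc)
qed simp

lemma binom_series_real:
  assumes "0 \<le> u" "u < (1::real)"
  shows "(\<lambda>m. pochhammer r m / fact m * u ^ m) sums (1 - u) powr (-r)"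
proof -
  have s: "(\<lambda>n. ((-r) gchoose n) * (-u)^n) sums (1 + -u) powr (-r)"
    by (rule gen_binomial_real[of "-u" "-r"]) (use assms in simp)
  have e: "((-r) gchoose n) * (-u)^n = pochhammer r n / fact n * u ^ n" for n
  proof -
    have g: "(-r) gchoose n = (-1)^n * pochhammer r n / fact n" by (simp add: gbinomial_pochhammer)
    have p: "(-u)^n = (-1)^n * u^n" by (rule power_minus)
    have gen: "\<And>s a b c::real. (s * a / b) * (s * c) = (s * s) * (a / b * c)"
      by (simp add: divide_inverse mult_ac)
    show ?thesis unfolding g p gen minus_one_mult_self by simp
  qed
  show ?thesis using s unfolding e by simp
qed

lemma norm_gchoose_le: "norm ((-(z::complex)) gchoose m) \<le> pochhammer (norm z) m / fact m"
proof -
  have "(-z) gchoose m = (-1)^m * pochhammer z m / fact m" by (simp add: gbinomial_pochhammer)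
  then have "norm ((-z) gchoose m) = norm ((-1::complex)^m * pochhammer z m) / norm (fact m :: complex)"
    by (simp only: norm_divide)
  also have "\<dots> = norm (pochhammer z m) / fact m" by (simp add: norm_mult norm_power)
  finally have "norm ((-z) gchoose m) = norm (pochhammer z m) / fact m" .
  also have "\<dots> \<le> pochhammer (norm z) m / fact m"
    by (intro divide_right_mono norm_pochhammer_le) auto
  finally show ?thesis .
qed

lemma infsum_eq_suminf_norm:
  fixes f :: "nat \<Rightarrow> 'a::banach"
  assumes "summable (\<lambda>n. norm (f n))"
  shows "infsum f UNIV = suminf f"
proof -
  have "summable f" by (rule summable_norm_cancel[OF assms])
  then have "(f has_sum suminf f) UNIV"
    by (intro norm_summable_imp_has_sum[OF assms] summable_sums)
  then show ?thesis by (simp add: has_sum_iff)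
qed

lemma double_series_swap:
  fixes a :: "nat \<Rightarrow> nat \<Rightarrow> complex" and A B :: "nat \<Rightarrow> real"
  assumes A: "summable A" "\<And>n. A n \<ge> 0" and B: "summable B" "\<And>m. B m \<ge> 0"
    and bnd: "\<And>n m. norm (a n m) \<le> A n * B m"
  shows "summable (\<lambda>n. \<Sum>m. a n m)" "summable (\<lambda>m. \<Sum>n. a n m)"
        "(\<Sum>n. \<Sum>m. a n m) = (\<Sum>m. \<Sum>n. a n m)"
proof -
  have nsA: "summable (\<lambda>n. norm (A n))" using A by simp
  have nsB: "summable (\<lambda>n. norm (B n))" using B by simp
  have rowsn: "summable (\<lambda>m. norm (a n m))" for n
    by (rule summable_comparison_test'[of "\<lambda>m. A n * B m" 0]) (use B bnd in \<open>auto intro: summable_mult\<close>)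
  have colsn: "summable (\<lambda>n. norm (a n m))" for m
    by (rule summable_comparison_test'[of "\<lambda>n. A n * B m" 0]) (use A bnd in \<open>auto intro: summable_mult2\<close>)
  have rowb: "norm (\<Sum>m. a n m) \<le> A n * suminf B" for n
  proof -
    have "norm (\<Sum>m. a n m) \<le> (\<Sum>m. A n * B m)"
      by (rule norm_suminf_le) (use bnd B in \<open>auto intro: summable_mult\<close>)
    also have "\<dots> = A n * suminf B" using B by (simp add: suminf_mult)
    finally show ?thesis .
  qed
  have colb: "norm (\<Sum>n. a n m) \<le> suminf A * B m" for m
  proof -
    have "norm (\<Sum>n. a n m) \<le> (\<Sum>n. A n * B m)"
      by (rule norm_suminf_le) (use bnd A in \<open>auto intro: summable_mult2\<close>)
    also have "\<dots> = suminf A * B m" using A by (simp add: suminf_mult2)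
    finally show ?thesis .
  qed
  have rowsum: "summable (\<lambda>n. norm (\<Sum>m. a n m))"
    by (rule summable_comparison_test'[of "\<lambda>n. A n * suminf B" 0]) (use A rowb in \<open>auto intro: summable_mult2\<close>)
  have colsum: "summable (\<lambda>m. norm (\<Sum>n. a n m))"
    by (rule summable_comparison_test'[of "\<lambda>m. suminf A * B m" 0]) (use B colb in \<open>auto intro: summable_mult\<close>)
  show "summable (\<lambda>n. \<Sum>m. a n m)" by (rule summable_norm_cancel[OF rowsum])
  show "summable (\<lambda>m. \<Sum>n. a n m)" by (rule summable_norm_cancel[OF colsum])
  define g where "g = (\<lambda>(n::nat, m::nat). A n * B m)"
  have gn: "norm (g (n, m)) = A n * B m" for n m
    using A(2)[of n] B(2)[of m] by (simp add: g_def abs_mult)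
  have gn': "norm (norm (g (n, m))) = A n * B m" for n m
    using A(2)[of n] B(2)[of m] by (simp add: g_def abs_mult)
  have gA: "(\<lambda>p. norm (g p)) summable_on (UNIV \<times> UNIV)"
  proof (rule iffD2[OF Infinite_Sum.abs_summable_on_Sigma_iff], intro conjI ballI)
    fix n :: nat
    have "summable (\<lambda>m. A n * B m)" by (rule summable_mult[OF B(1)])
    then have "summable (\<lambda>m. norm (norm (g (n, m))))" by (simp only: gn')
    then show "(\<lambda>m. norm (g (n, m))) summable_on UNIV" by (rule norm_summable_imp_summable_on)
  next
    have e: "infsum (\<lambda>m. norm (g (n, m))) UNIV = A n * suminf B" for n
    proof -
      have "summable (\<lambda>m. A n * B m)" by (rule summable_mult[OF B(1)])
      then have "summable (\<lambda>m. norm (norm (g (n, m))))" by (simp only: gn')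
      then have "infsum (\<lambda>m. norm (g (n, m))) UNIV = (\<Sum>m. norm (g (n, m)))"
        by (rule infsum_eq_suminf_norm)
      also have "\<dots> = (\<Sum>m. A n * B m)" by (simp only: gn)
      also have "\<dots> = A n * suminf B" using B by (simp add: suminf_mult)
      finally show ?thesis .
    qed
    have "summable (\<lambda>n. A n * suminf B)" by (rule summable_mult2[OF A(1)])
    moreover have "norm (norm (A n * suminf B)) = A n * suminf B" for n
      using A(2)[of n] suminf_nonneg[OF B(1) B(2)] by (simp add: abs_mult)
    ultimately have "summable (\<lambda>n. norm (norm (A n * suminf B)))" by simp
    then show "(\<lambda>n. norm (infsum (\<lambda>m. norm (g (n, m))) UNIV)) summable_on UNIV"
      unfolding e by (rule norm_summable_imp_summable_on)
  qed
  have aA: "(\<lambda>p. norm ((\<lambda>(n, m). a n m) p)) summable_on (UNIV \<times> UNIV)"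
  proof (rule Infinite_Sum.abs_summable_on_comparison_test[OF gA])
    fix p :: "nat \<times> nat"
    obtain n m where p: "p = (n, m)" by (cases p)
    show "norm ((\<lambda>(n, m). a n m) p) \<le> norm (g p)" unfolding p gn using bnd by simp
  qed
  have aS: "(\<lambda>(n, m). a n m) summable_on (UNIV \<times> UNIV)"
    by (rule Infinite_Sum.abs_summable_summable[OF aA])
  have "infsum (\<lambda>n. infsum (\<lambda>m. a n m) UNIV) UNIV = infsum (\<lambda>m. infsum (\<lambda>n. a n m) UNIV) UNIV"
    by (rule infsum_swap_banach[OF aS])
  moreover have "infsum (\<lambda>n. infsum (\<lambda>m. a n m) UNIV) UNIV = (\<Sum>n. \<Sum>m. a n m)"
    using infsum_eq_suminf_norm[OF rowsn] infsum_eq_suminf_norm[OF rowsum] by simp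
  moreover have "infsum (\<lambda>m. infsum (\<lambda>n. a n m) UNIV) UNIV = (\<Sum>m. \<Sum>n. a n m)"
    using infsum_eq_suminf_norm[OF colsn] infsum_eq_suminf_norm[OF colsum] by simp
  ultimately show "(\<Sum>n. \<Sum>m. a n m) = (\<Sum>m. \<Sum>n. a n m)" by simp
qed

lemma zetaE_series:
  assumes q: "q > 0" and z: "Re z > 0"
  shows "(\<lambda>n. (-1::complex)^n * (complex_of_real (real n + q)) powr (-z)) sums zetaE z q"
  using Zf_series[OF q z] zetaE_Zf[OF q] by simp

lemma zetaE_shift_series:
  assumes q: "q > 0" and x: "\<bar>x\<bar> < q" and z: "Re z > 1"
  shows "(\<lambda>m. ((-z) gchoose m) * of_real x ^ m * zetaE (z + of_nat m) q) sums zetaE z (q + x)"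
proof -
  define r where "r = norm z"
  define u where "u = \<bar>x\<bar> / q"
  have u: "0 \<le> u" "u < 1" using q x by (auto simp: u_def)
  define a where "a n m = ((-z) gchoose m) * of_real x ^ m * ((-1)^n * complex_of_real (real n + q) powr (-z - of_nat m))" for n m
  define A where "A n = (real n + q) powr (-Re z)" for n
  define B where "B m = pochhammer r m / fact m * u ^ m" for m
  have sA: "summable A" unfolding A_def using z q by (intro summable_shift_powr) auto
  have A0: "A n \<ge> 0" for n by (simp add: A_def)
  have sB: "summable B" unfolding B_def using binom_series_real[OF u] sums_summable by blast
  have B0: "B m \<ge> 0" for m using u by (simp add: B_def r_def pochhammer_nonneg_real)
  have bnd: "norm (a n m) \<le> A n * B m" for n m
  proof -
    have nq: "real n + q > 0" using q by simp
    have "norm (complex_of_real (real n + q) powr (-z - of_nat m)) = (real n + q) powr (-Re z - real m)"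
      using nq by (simp add: norm_powr_real_powr)
    also have "\<dots> = A n / (real n + q) ^ m"
      using nq by (simp add: A_def powr_diff powr_realpow)
    finally have e1: "norm (complex_of_real (real n + q) powr (-z - of_nat m)) = A n / (real n + q) ^ m" .
    have "norm (a n m) = norm ((-z) gchoose m) * (\<bar>x\<bar> ^ m * (A n / (real n + q) ^ m))"
      unfolding a_def norm_mult e1 by (simp add: norm_power)
    also have "\<bar>x\<bar> ^ m * (A n / (real n + q) ^ m) = A n * (\<bar>x\<bar> / (real n + q)) ^ m"
      by (simp add: power_divide)
    also have "norm ((-z) gchoose m) * (A n * (\<bar>x\<bar> / (real n + q)) ^ m) \<le> (pochhammer r m / fact m) * (A n * u ^ m)"
    proof -
      have pm: "(\<bar>x\<bar> / (real n + q)) ^ m \<le> u ^ m"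
        unfolding u_def using q by (intro power_mono divide_left_mono) auto
      have "0 \<le> pochhammer r m / fact m" unfolding r_def by (simp add: pochhammer_nonneg_real)
      then show ?thesis unfolding r_def
        using q by (intro mult_mono mult_left_mono norm_gchoose_le pm A0) (auto intro!: mult_nonneg_nonneg A0)
    qed
    finally show ?thesis by (simp add: B_def mult_ac)
  qed
  note sw = double_series_swap[OF sA A0 sB B0 bnd]
  have row: "(\<Sum>m. a n m) = (-1)^n * complex_of_real (real n + (q + x)) powr (-z)" for n
  proof -
    have "\<bar>x\<bar> < \<bar>real n + q\<bar>" using x q by simp
    from gen_binomial_complex'[OF this, of "-z"]
    have "(\<lambda>m. ((-z) gchoose m) * of_real x ^ m * of_real (real n + q) powr (-z - of_nat m)) sums
            of_real (x + (real n + q)) powr (-z)" .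
    then have "(\<lambda>m. (-1)^n * (((-z) gchoose m) * of_real x ^ m * of_real (real n + q) powr (-z - of_nat m))) sums
            ((-1)^n * of_real (x + (real n + q)) powr (-z))" by (rule sums_mult)
    then have "(\<lambda>m. a n m) sums ((-1)^n * complex_of_real (real n + (q + x)) powr (-z))"
      unfolding a_def by (simp add: mult_ac add_ac)
    then show ?thesis by (simp add: sums_iff)
  qed
  have col: "(\<Sum>n. a n m) = ((-z) gchoose m) * of_real x ^ m * zetaE (z + of_nat m) q" for m
  proof -
    have "Re (z + of_nat m) > 0" using z by simp
    from zetaE_series[OF q this]
    have "(\<lambda>n. (-1::complex)^n * (complex_of_real (real n + q)) powr (-(z + of_nat m))) sums zetaE (z + of_nat m) q" .
    then have "(\<lambda>n. ((-z) gchoose m) * of_real x ^ m * ((-1::complex)^n * (complex_of_real (real n + q)) powr (-(z + of_nat m))))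
       sums (((-z) gchoose m) * of_real x ^ m * zetaE (z + of_nat m) q)" by (rule sums_mult)
    then have "(\<lambda>n. a n m) sums (((-z) gchoose m) * of_real x ^ m * zetaE (z + of_nat m) q)"
      unfolding a_def by (simp add: algebra_simps)
    then show ?thesis by (simp add: sums_iff)
  qed
  have ez: "(\<Sum>n. \<Sum>m. a n m) = zetaE z (q + x)"
  proof -
    have "q + x > 0" using x by simp
    from zetaE_series[OF this, of z] z
    have "(\<lambda>n. (-1::complex)^n * (complex_of_real (real n + (q + x))) powr (-z)) sums zetaE z (q + x)" by simp
    then show ?thesis unfolding row by (simp add: sums_iff)
  qed
  have "(\<lambda>m. \<Sum>n. a n m) sums (\<Sum>m. \<Sum>n. a n m)" by (rule summable_sums[OF sw(2)])
  then have "(\<lambda>m. \<Sum>n. a n m) sums zetaE z (q + x)" unfolding sw(3)[symmetric] ez .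
  then show ?thesis unfolding col .
qed

lemma zetaE_holo:
  assumes q: "q > 0"
  shows "(\<lambda>z. zetaE z q) holomorphic_on A"
proof -
  have "(\<lambda>z. zetaE z q) = Zf q" using zetaE_Zf[OF q] by auto
  then show ?thesis using Zf_holo[OF q] holomorphic_on_subset by (metis subset_UNIV)
qed

lemma zetaE_shift_holo:
  assumes q: "q > 0"
  shows "(\<lambda>z. zetaE (z + c) q) holomorphic_on A"
proof -
  have "((\<lambda>z. zetaE z q) \<circ> (\<lambda>z. z + c)) holomorphic_on A"
    by (rule holomorphic_on_compose) (auto intro!: holomorphic_intros zetaE_holo[OF q])
  then show ?thesis by (simp add: o_def)
qed

lemma zetaE_bound:
  assumes q: "q > 0" and w: "Re w \<ge> 2"
  shows "norm (zetaE w q) \<le> (\<Sum>n. (real n + q) powr (-2)) * q powr (2 - Re w)"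
proof -
  have s2: "summable (\<lambda>n. (real n + q) powr (-2))" using q by (intro summable_shift_powr) auto
  have "zetaE w q = (\<Sum>n. (-1::complex)^n * (complex_of_real (real n + q)) powr (-w))"
    using zetaE_series[OF q, of w] w by (simp add: sums_iff)
  also have "norm \<dots> \<le> (\<Sum>n. (real n + q) powr (-2) * q powr (2 - Re w))"
  proof (rule norm_suminf_le)
    show "summable (\<lambda>n. (real n + q) powr (-2) * q powr (2 - Re w))" by (rule summable_mult2[OF s2])
    fix n :: nat
    have nq: "real n + q > 0" using q by simp
    have "norm ((-1::complex)^n * (complex_of_real (real n + q)) powr (-w)) = (real n + q) powr (-Re w)"
      using nq by (simp add: norm_mult norm_power norm_powr_real_powr)
    also have "\<dots> = (real n + q) powr (-2) * (real n + q) powr (2 - Re w)"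
      by (simp add: powr_add[symmetric])
    also have "\<dots> \<le> (real n + q) powr (-2) * q powr (2 - Re w)"
      using w q by (intro mult_left_mono powr_mono2') auto
    finally show "norm ((-1::complex)^n * (complex_of_real (real n + q)) powr (-w)) \<le> (real n + q) powr (-2) * q powr (2 - Re w)" .
  qed
  also have "\<dots> = (\<Sum>n. (real n + q) powr (-2)) * q powr (2 - Re w)"
    by (rule suminf_mult2[OF s2, symmetric])
  finally show ?thesis .
qed

definition fterm :: "real \<Rightarrow> real \<Rightarrow> nat \<Rightarrow> complex \<Rightarrow> complex" where
  "fterm q x m z = ((-z) gchoose m) * of_real x ^ m * zetaE (z + of_nat m) q"

lemma gchoose_minus_eq: "((-z) gchoose m) = (-1)^m * pochhammer (z::complex) m / fact m"
  by (simp add: gbinomial_pochhammer)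

lemma fterm_alt: "fterm q x m = (\<lambda>z. ((-1)^m * of_real x ^ m / fact m) * (pochhammer z m * zetaE (z + of_nat m) q))"
  by (rule ext) (simp add: fterm_def gchoose_minus_eq)

lemma fterm_holo:
  assumes q: "q > 0"
  shows "fterm q x m holomorphic_on A"
  unfolding fterm_alt by (intro holomorphic_intros zetaE_shift_holo[OF q])

lemma fterm_local_bound:
  assumes q: "q > 0" and x: "\<bar>x\<bar> < q" and x0: "Re x0 > 0"
  shows "\<exists>d>0. \<exists>M N. summable M \<and> cball x0 d \<subseteq> {z. Re z > 0} \<and>
           (\<forall>m\<ge>N. \<forall>y\<in>cball x0 d. norm (fterm q x m y) \<le> M m)"
proof -
  define d where "d = Re x0 / 2"
  have d: "d > 0" using x0 by (simp add: d_def)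
  define R where "R = norm x0 + d"
  have R0: "0 \<le> R" using d by (simp add: R_def)
  define u where "u = \<bar>x\<bar> / q"
  have u: "0 \<le> u" "u < 1" using q x by (auto simp: u_def)
  define S2 where "S2 = (\<Sum>n. (real n + q) powr (-2))"
  have S20: "S2 \<ge> 0" unfolding S2_def using q by (intro suminf_nonneg summable_shift_powr) auto
  define Qm where "Qm = q powr (2 - (Re x0 - d)) + q powr (2 - (Re x0 + d))"
  define M where "M m = pochhammer R m / fact m * u ^ m * (S2 * Qm)" for m
  have sM: "summable M" unfolding M_def
    by (intro summable_mult2) (use binom_series_real[OF u, of R] sums_summable in blast)
  have ball: "\<And>y. y \<in> cball x0 d \<Longrightarrow> Re x0 - d \<le> Re y \<and> Re y \<le> Re x0 + d \<and> norm y \<le> R"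
  proof -
    fix y assume "y \<in> cball x0 d"
    then have dy: "norm (x0 - y) \<le> d" by (simp add: dist_norm)
    have "\<bar>Re x0 - Re y\<bar> \<le> norm (x0 - y)" using abs_Re_le_cmod[of "x0 - y"] by simp
    moreover have "norm y \<le> norm x0 + norm (x0 - y)" using norm_triangle_ineq2[of y x0] by (simp add: norm_minus_commute)
    ultimately show "Re x0 - d \<le> Re y \<and> Re y \<le> Re x0 + d \<and> norm y \<le> R"
      using dy unfolding R_def by (auto simp: abs_le_iff)
  qed
  have sub: "cball x0 d \<subseteq> {z. Re z > 0}"
  proof
    fix y assume "y \<in> cball x0 d"
    then have "Re y \<ge> Re x0 - d" using ball by blast
    then show "y \<in> {z. Re z > 0}" using x0 by (simp add: d_def)
  qed
  have bnd: "norm (fterm q x m y) \<le> M m" if m: "m \<ge> 2" and y: "y \<in> cball x0 d" for m y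
  proof -
    note yb = ball[OF y]
    have rey: "Re y > 0" using sub y by auto
    have "Re (y + of_nat m) \<ge> 2" using rey m by simp
    from zetaE_bound[OF q this]
    have zb: "norm (zetaE (y + of_nat m) q) \<le> S2 * q powr (2 - Re y - real m)"
      by (simp add: S2_def algebra_simps)
    have qp: "q powr (2 - Re y - real m) = q powr (2 - Re y) / q ^ m"
      using q by (simp add: powr_diff powr_realpow)
    have qb: "q powr (2 - Re y) \<le> Qm"
    proof (cases "q \<ge> 1")
      case True
      then have "q powr (2 - Re y) \<le> q powr (2 - (Re x0 - d))" using yb by (intro powr_mono) auto
      then show ?thesis unfolding Qm_def by (smt (verit) powr_ge_zero)
    next
      case False
      then have "q powr (2 - Re y) \<le> q powr (2 - (Re x0 + d))" using yb q by (intro powr_mono') auto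
      then show ?thesis unfolding Qm_def by (smt (verit) powr_ge_zero)
    qed
    have "norm (fterm q x m y) = norm ((-y) gchoose m) * \<bar>x\<bar> ^ m * norm (zetaE (y + of_nat m) q)"
      by (simp add: fterm_def norm_mult norm_power)
    also have "\<dots> \<le> (pochhammer R m / fact m) * \<bar>x\<bar> ^ m * (S2 * (Qm / q ^ m))"
    proof (intro mult_mono)
      show "norm ((-y) gchoose m) \<le> pochhammer R m / fact m"
        using norm_gchoose_le[of y m] pochhammer_mono_real[of "norm y" R m] yb
        by (smt (verit, best) divide_right_mono fact_ge_zero norm_ge_zero)
      show "norm (zetaE (y + of_nat m) q) \<le> S2 * (Qm / q ^ m)"
        using zb qb S20 q unfolding qp by (smt (verit) divide_right_mono mult_left_mono zero_less_power)
    qed (use S20 R0 in \<open>auto intro!: divide_nonneg_nonneg pochhammer_nonneg_real mult_nonneg_nonneg\<close>)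
    also have "\<dots> = M m" unfolding M_def u_def using q by (simp add: power_divide field_simps)
    finally show ?thesis .
  qed
  have "\<forall>m\<ge>2. \<forall>y\<in>cball x0 d. norm (fterm q x m y) \<le> M m" using bnd by blast
  then show ?thesis using d sM sub by blast
qed

lemma R_holo:
  assumes q: "q > 0" and x: "\<bar>x\<bar> < q"
  shows "(\<lambda>z. \<Sum>m. fterm q x m z) holomorphic_on {z. Re z > 0}"
proof (rule holo_suminf(1))
  show "open {z. Re z > 0}" by (rule open_halfspace_Re_gt)
  show "fterm q x m holomorphic_on {z. Re z > 0}" for m by (rule fterm_holo[OF q])
  fix x0 :: complex assume "x0 \<in> {z. Re z > 0}"
  then obtain d M N where d: "d > 0" "summable M" "cball x0 d \<subseteq> {z. Re z > 0}"
      "\<forall>m\<ge>N. \<forall>y\<in>cball x0 d. norm (fterm q x m y) \<le> M m"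
    using fterm_local_bound[OF q x] by force
  have "\<forall>\<^sub>F m in sequentially. \<forall>y\<in>ball x0 d \<inter> {z. Re z > 0}. norm (fterm q x m y) \<le> M m"
    unfolding eventually_sequentially using d(4) ball_subset_cball by blast
  then show "\<exists>d h. 0 < d \<and> summable h \<and> (\<forall>\<^sub>F m in sequentially. \<forall>y\<in>ball x0 d \<inter> {z. Re z > 0}. norm (fterm q x m y) \<le> h m)"
    using d(1,2) by blast
qed

lemma R_eq:
  assumes q: "q > 0" and x: "\<bar>x\<bar> < q" and z: "Re z > 0"
  shows "zetaE z (q + x) = (\<Sum>m. fterm q x m z)"
proof (rule analytic_continuation_open[where s="{z. Re z > 1}" and s'="{z. Re z > 0}"
      and f="\<lambda>z. zetaE z (q + x)" and g="\<lambda>z. \<Sum>m. fterm q x m z"])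
  show "open {z. Re z > 1}" by (rule open_halfspace_Re_gt)
  show "open {z. Re z > 0}" by (rule open_halfspace_Re_gt)
  show "{z. Re z > 1} \<noteq> {}" by (auto intro!: exI[of _ 2])
  show "connected {z. Re z > 0}" by (rule convex_connected[OF convex_halfspace_Re_gt])
  show "{z. Re z > 1} \<subseteq> {z. Re z > 0}" by auto
  show "(\<lambda>z. zetaE z (q + x)) holomorphic_on {z. Re z > 0}" using x by (intro zetaE_holo) simp
  show "(\<lambda>z. \<Sum>m. fterm q x m z) holomorphic_on {z. Re z > 0}" by (rule R_holo[OF q x])
  show "z \<in> {z. Re z > 0}" using z by simp
  fix w :: complex assume "w \<in> {z. Re z > 1}"
  then have "(\<lambda>m. fterm q x m w) sums zetaE w (q + x)"
    unfolding fterm_def using zetaE_shift_series[OF q x] by simp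
  then show "zetaE w (q + x) = (\<Sum>m. fterm q x m w)" by (simp add: sums_iff)
qed

lemma main_sums:
  assumes q: "q > 0" and x: "\<bar>x\<bar> < q"
  shows "(\<lambda>m. (deriv ^^ l) (fterm q x m) 1) sums (deriv ^^ l) (\<lambda>w. zetaE w (q + x)) 1"
proof -
  have S: "open {z::complex. Re z > 0}" by (rule open_halfspace_Re_gt)
  have "(deriv ^^ l) (\<lambda>w. zetaE w (q + x)) 1 = (deriv ^^ l) (\<lambda>z. \<Sum>m. fterm q x m z) 1"
  proof (rule higher_deriv_transform_within_open[OF _ R_holo[OF q x] S])
    show "(\<lambda>w. zetaE w (q + x)) holomorphic_on {z. Re z > 0}" using x by (intro zetaE_holo) simp
  qed (use R_eq[OF q x] in auto)
  moreover have "(\<lambda>m. (deriv ^^ l) (fterm q x m) 1) sums (deriv ^^ l) (\<lambda>z. \<Sum>m. fterm q x m z) 1"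
  proof (rule termwise_higher_deriv[OF S])
    show "fterm q x m holomorphic_on {z. Re z > 0}" for m by (rule fterm_holo[OF q])
    show "\<exists>d>0. \<exists>M N. summable M \<and> cball x0 d \<subseteq> {z. Re z > 0} \<and> (\<forall>n\<ge>N. \<forall>y\<in>cball x0 d. norm (fterm q x n y) \<le> M n)"
      if "x0 \<in> {z. Re z > 0}" for x0 using fterm_local_bound[OF q x] that by simp
  qed simp
  ultimately show ?thesis by simp
qed

lemma fterm_deriv:
  assumes q: "q > 0"
  shows "(deriv ^^ l) (fterm q x m) 1 = ((-1)^m * of_real x ^ m / fact m) *
     (\<Sum>k=0..l. of_nat (l choose k) * (fact k * of_nat (stirling (Suc m) (Suc k))) * zetaE_deriv (l - k) (1 + of_nat m) q)"
proof -
  have h1: "(\<lambda>z::complex. pochhammer z m) holomorphic_on UNIV" by (intro holomorphic_intros)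
  have h2: "(\<lambda>z. zetaE (z + of_nat m) q) holomorphic_on UNIV" by (rule zetaE_shift_holo[OF q])
  have h12: "(\<lambda>z. pochhammer z m * zetaE (z + of_nat m) q) holomorphic_on UNIV"
    by (intro holomorphic_intros h2)
  have "(deriv ^^ l) (fterm q x m) 1 = ((-1)^m * of_real x ^ m / fact m) *
      (deriv ^^ l) (\<lambda>z. pochhammer z m * zetaE (z + of_nat m) q) 1"
    unfolding fterm_alt by (rule higher_deriv_cmult[OF h12]) auto
  also have "(deriv ^^ l) (\<lambda>z. pochhammer z m * zetaE (z + of_nat m) q) 1 =
      (\<Sum>k=0..l. of_nat (l choose k) * (deriv ^^ k) (\<lambda>z. pochhammer z m) 1 * (deriv ^^ (l - k)) (\<lambda>z. zetaE (z + of_nat m) q) 1)"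
    by (rule higher_deriv_mult[OF h1 h2]) auto
  also have "\<dots> = (\<Sum>k=0..l. of_nat (l choose k) * (fact k * of_nat (stirling (Suc m) (Suc k))) * zetaE_deriv (l - k) (1 + of_nat m) q)"
  proof (rule sum.cong[OF refl])
    fix k
    have "(deriv ^^ (l - k)) (\<lambda>z. zetaE (z + of_nat m) q) 1 = (deriv ^^ (l - k)) (\<lambda>w. zetaE w q) (1 + of_nat m)"
      using higher_deriv_shift[of "\<lambda>w. zetaE w q" "l - k" "of_nat m" 1] zetaE_holo[OF q] by simp
    then show "of_nat (l choose k) * (deriv ^^ k) (\<lambda>z. pochhammer z m) 1 * (deriv ^^ (l - k)) (\<lambda>z. zetaE (z + of_nat m) q) 1 =
        of_nat (l choose k) * (fact k * of_nat (stirling (Suc m) (Suc k))) * zetaE_deriv (l - k) (1 + of_nat m) q"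
      by (simp add: higher_deriv_pochhammer zetaE_deriv_def)
  qed
  finally show ?thesis .
qed

lemma sign_stirling:
  "(-1::complex)^(Suc i) * of_nat (stirling (i + 2) (k + 1)) =
     (-1)^k * of_int (stirling1_signed (i + 2) (k + 1))"
proof (cases "k \<le> i + 1")
  case True
  have e: "i + 2 - (k + 1) = i + 1 - k" by simp
  have "(-1::complex)^k * (-1)^(i + 1 - k) = (-1)^(k + (i + 1 - k))" by (simp add: power_add)
  also have "k + (i + 1 - k) = Suc i" using True by simp
  finally have p: "(-1::complex)^k * (-1)^(i + 1 - k) = (-1)^(Suc i)" .
  have gen: "(-1::complex)^(Suc i) * of_nat S = (-1)^k * of_int ((-1)^(i + 1 - k) * int S)" for S :: nat
  proof -
    have "(-1::complex)^k * of_int ((-1)^(i + 1 - k) * int S) = ((-1)^k * (-1)^(i + 1 - k)) * of_nat S"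
      by simp
    then show ?thesis unfolding p by simp
  qed
  show ?thesis unfolding stirling1_signed_def e by (rule gen)
next
  case False
  have z0: "stirling (i + 2) (k + 1) = 0" by (rule stirling_less) (use False in simp)
  show ?thesis by (simp only: stirling1_signed_def z0) simp
qed

lemma t_Suc:
  assumes q: "q > 0"
  shows "(deriv ^^ l) (fterm q x (Suc i)) 1 =
    of_real (x ^ (i + 2 - 1) / fact (i + 2 - 1)) *
            (\<Sum>k=0..l. of_nat (l choose k) * (-1) ^ k * fact k *
                 of_int (stirling1_signed (i + 2) (k + 1)) * zetaE_deriv (l - k) (of_nat (i + 2)) q)"
proof -
  have e1: "(1::complex) + of_nat (Suc i) = of_nat (i + 2)" by simp
  have e2: "i + 2 - 1 = Suc i" by simp
  have "(deriv ^^ l) (fterm q x (Suc i)) 1 = ((-1)^(Suc i) * of_real x ^ (Suc i) / fact (Suc i)) *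
     (\<Sum>k=0..l. of_nat (l choose k) * (fact k * of_nat (stirling (Suc (Suc i)) (Suc k))) * zetaE_deriv (l - k) (of_nat (i + 2)) q)"
    using fterm_deriv[OF q, of l x "Suc i"] unfolding e1 .
  also have "\<dots> = (of_real x ^ (Suc i) / fact (Suc i)) *
     (\<Sum>k=0..l. (-1)^(Suc i) * (of_nat (l choose k) * (fact k * of_nat (stirling (Suc (Suc i)) (Suc k))) * zetaE_deriv (l - k) (of_nat (i + 2)) q))"
    by (simp add: sum_distrib_left mult_ac)
  also have sumeq: "(\<Sum>k=0..l. (-1)^(Suc i) * (of_nat (l choose k) * (fact k * of_nat (stirling (Suc (Suc i)) (Suc k))) * zetaE_deriv (l - k) (of_nat (i + 2)) q))
     = (\<Sum>k=0..l. of_nat (l choose k) * (-1) ^ k * fact k *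
                 of_int (stirling1_signed (i + 2) (k + 1)) * zetaE_deriv (l - k) (of_nat (i + 2)) q)"
  proof (rule sum.cong[OF refl])
    fix k
    have s: "(-1::complex)^(Suc i) * of_nat (stirling (i + 2) (k + 1)) =
     (-1)^k * of_int (stirling1_signed (i + 2) (k + 1))" by (rule sign_stirling)
    have "(-1::complex)^(Suc i) * (of_nat (l choose k) * (fact k * of_nat (stirling (Suc (Suc i)) (Suc k))) * zetaE_deriv (l - k) (of_nat (i + 2)) q)
       = of_nat (l choose k) * fact k * ((-1)^(Suc i) * of_nat (stirling (i + 2) (k + 1))) * zetaE_deriv (l - k) (of_nat (i + 2)) q"
      by (simp only: Suc_eq_plus1 add_2_eq_Suc' mult_ac)
    also have "\<dots> = of_nat (l choose k) * (-1) ^ k * fact k *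
                 of_int (stirling1_signed (i + 2) (k + 1)) * zetaE_deriv (l - k) (of_nat (i + 2)) q"
      unfolding s by (simp only: mult_ac)
    finally show "(-1::complex)^(Suc i) * (of_nat (l choose k) * (fact k * of_nat (stirling (Suc (Suc i)) (Suc k))) * zetaE_deriv (l - k) (of_nat (i + 2)) q)
       = of_nat (l choose k) * (-1) ^ k * fact k *
                 of_int (stirling1_signed (i + 2) (k + 1)) * zetaE_deriv (l - k) (of_nat (i + 2)) q" .
  qed
  also have "of_real x ^ (Suc i) / fact (Suc i) = (of_real (x ^ (i + 2 - 1) / fact (i + 2 - 1)) :: complex)"
    unfolding e2 by simp
  finally show ?thesis .
qed

lemma t_zero:
  assumes q: "q > 0"
  shows "(deriv ^^ l) (fterm q x 0) 1 = zetaE_deriv l 1 q"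
proof -
  have "(deriv ^^ l) (fterm q x 0) 1 =
     (\<Sum>k=0..l. of_nat (l choose k) * (fact k * of_nat (stirling (Suc 0) (Suc k))) * zetaE_deriv (l - k) 1 q)"
    using fterm_deriv[OF q, of l x 0] by simp
  also have "\<dots> = of_nat (l choose 0) * (fact 0 * of_nat (stirling (Suc 0) (Suc 0))) * zetaE_deriv (l - 0) 1 q +
      (\<Sum>k=Suc 0..l. of_nat (l choose k) * (fact k * of_nat (stirling (Suc 0) (Suc k))) * zetaE_deriv (l - k) 1 q)"
    by (rule sum.atLeast_Suc_atMost) simp
  also have "(\<Sum>k=Suc 0..l. of_nat (l choose k) * (fact k * of_nat (stirling (Suc 0) (Suc k))) * zetaE_deriv (l - k) 1 q) = 0"
    by (intro sum.neutral ballI) (simp add: stirling_less)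
  finally show ?thesis by simp
qed

theorem theorem3p9:
  fixes q x :: real and l :: nat
  assumes "q > 0" and "\<bar>x\<bar> < q"
  defines "T \<equiv> (\<lambda>i. let j = i + 2 in
            of_real (x ^ (j - 1) / fact (j - 1)) *
            (\<Sum>k=0..l. of_nat (l choose k) * (-1) ^ k * fact k *
                 of_int (stirling1_signed j (k + 1)) * zetaE_deriv (l - k) (of_nat j) q))"
  shows "summable T \<and>
         mod_stieltjes l (q + x) = mod_stieltjes l q + (-1) ^ l * (\<Sum>i. T i)"
proof -
  note q = assms(1) and x = assms(2)
  define V where "V = (deriv ^^ l) (\<lambda>w. zetaE w (q + x)) 1"
  define t where "t m = (deriv ^^ l) (fterm q x m) 1" for m
  have st: "t sums V" unfolding t_def V_def by (rule main_sums[OF q x])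
  have TT: "T = (\<lambda>i. t (Suc i))"
    unfolding T_def t_def Let_def by (rule ext) (rule t_Suc[OF q, symmetric])
  have "(\<lambda>i. t (Suc i)) sums (V - t 0)"
    using st sums_Suc_iff[of t "V - t 0"] by simp
  then have sT: "T sums (V - t 0)" unfolding TT .
  have t0: "t 0 = zetaE_deriv l 1 q" unfolding t_def by (rule t_zero[OF q])
  have "mod_stieltjes l (q + x) = (-1)^l * V" by (simp add: mod_stieltjes_def zetaE_deriv_def V_def)
  also have "\<dots> = (-1)^l * t 0 + (-1)^l * (V - t 0)" by (simp add: algebra_simps)
  also have "(-1)^l * t 0 = mod_stieltjes l q" by (simp add: mod_stieltjes_def t0)
  also have "V - t 0 = (\<Sum>i. T i)" using sT by (simp add: sums_iff)
  finally show ?thesis using sT sums_summable by blast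
qed

end
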